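(* Let $m,n$ be positive integers. For all $\sigma\in\mathfrak S_{mn}$ and all partitions $\lambda$ with $\ell(\lambda)\le mn$, $l(\lambda;\sigma)\succeq l(\lambda;Id)$.
   Context: $\lambda=(\lambda_1,\dots,\lambda_{mn})$ padded with zeros; $\mathbf u\succeq\mathbf v$ means $u_i\ge v_i$ for all $i$; $Id$ is the identity permutation. Variables $s_0,\dots,s_{m-1},t_1,\dots,t_{n-2}$; $T=t_1\cdots t_{n-2}$; $x_i=s_1\cdots s_iT^i$ ($1\le i\le m-1$), $y_j=s_0s_1\cdots s_{m-1}T^{m-1}t_1\cdots t_{j-1}$ ($1\le j\le n-1$); $e(M)\in\mathbb Z^{m+n-2}$ is the exponent vector of a monomial $M$ (coordinates $s_0,\dots,s_{m-1},t_1,\dots,t_{n-2}$). Let $(z_1,\dots,z_{mn})=(1,x_1,\dots,x_{m-1},y_1,\dots,y_{n-1},x_1y_1,\dots,x_1y_{n-1},x_2y_1,\dots,x_{m-1}y_{n-1})$ and, for $\sigma\in\mathfrak S_{mn}$, $l(\lambda;\sigma)=e\big(\prod_{i=1}^{mn}z_i^{\lambda_{\sigma(i)}+mn-\sigma(i)}\big)$ (the concatenation of the paper's $l_s(\lambda;\sigma)$ and $l_t(\lambda;\sigma)$). *)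

theory Defs
  imports "HOL-Combinatorics.Permutations"
begin

text \<open>Variables s_0,...,s_(m-1) and t_1,...,t_(n-2).
  A monomial is represented by its exponent function on variables.\<close>

datatype var = S nat | Tv nat

type_synonym mono = "var \<Rightarrow> nat"

definition mone :: mono where "mone = (\<lambda>_. 0)"
definition mmul :: "mono \<Rightarrow> mono \<Rightarrow> mono" where "mmul a b = (\<lambda>v. a v + b v)"
definition mpow :: "mono \<Rightarrow> nat \<Rightarrow> mono" where "mpow a k = (\<lambda>v. k * a v)"
definition mprod :: "('i \<Rightarrow> mono) \<Rightarrow> 'i set \<Rightarrow> mono" where
  "mprod f A = (\<lambda>v. \<Sum>a\<in>A. f a v)"

definition svar :: "nat \<Rightarrow> mono" where "svar i = (\<lambda>v. if v = S i then 1 else 0)"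
definition tvar :: "nat \<Rightarrow> mono" where "tvar j = (\<lambda>v. if v = Tv j then 1 else 0)"

text \<open>The coordinates of the exponent vector e(M): s_0..s_(m-1), t_1..t_(n-2).\<close>
definition vars :: "nat \<Rightarrow> nat \<Rightarrow> var set" where
  "vars m n = S ` {0..<m} \<union> Tv ` {1..n-2}"

definition Tmono :: "nat \<Rightarrow> mono" where "Tmono n = mprod tvar {1..n-2}"

definition xmono :: "nat \<Rightarrow> nat \<Rightarrow> nat \<Rightarrow> mono" where
  "xmono m n i = mmul (mprod svar {1..i}) (mpow (Tmono n) i)"

definition ymono :: "nat \<Rightarrow> nat \<Rightarrow> nat \<Rightarrow> mono" where
  "ymono m n j = mmul (mprod svar {0..m-1}) (mmul (mpow (Tmono n) (m-1)) (mprod tvar {1..j-1}))"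

text \<open>(z_1,...,z_mn) = (1, x_1..x_(m-1), y_1..y_(n-1), x_1y_1,...,x_1y_(n-1), x_2y_1, ..., x_(m-1)y_(n-1))\<close>
definition zlist :: "nat \<Rightarrow> nat \<Rightarrow> mono list" where
  "zlist m n = [mone] @ map (xmono m n) [1..<m] @ map (ymono m n) [1..<n]
     @ concat (map (\<lambda>i. map (\<lambda>j. mmul (xmono m n i) (ymono m n j)) [1..<n]) [1..<m])"

definition zmono :: "nat \<Rightarrow> nat \<Rightarrow> nat \<Rightarrow> mono" where
  "zmono m n k = zlist m n ! (k - 1)"

definition lvec :: "nat \<Rightarrow> nat \<Rightarrow> (nat \<Rightarrow> nat) \<Rightarrow> (nat \<Rightarrow> nat) \<Rightarrow> mono" where
  "lvec m n lam \<sigma> = mprod (\<lambda>i. mpow (zmono m n i) (lam (\<sigma> i) + m * n - \<sigma> i)) {1..m*n}"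

definition succeq :: "nat \<Rightarrow> nat \<Rightarrow> mono \<Rightarrow> mono \<Rightarrow> bool" where
  "succeq m n u v \<longleftrightarrow> (\<forall>w\<in>vars m n. v w \<le> u w)"

text \<open>lambda = (lambda_1,...,lambda_mn) a partition with at most mn parts, padded with zeros.\<close>
definition is_partition_upto :: "nat \<Rightarrow> (nat \<Rightarrow> nat) \<Rightarrow> bool" where
  "is_partition_upto N lam \<longleftrightarrow> (\<forall>i j. 1 \<le> i \<longrightarrow> i \<le> j \<longrightarrow> j \<le> N \<longrightarrow> lam j \<le> lam i)"

end

theory Submission
  imports Defs
begin


lemma sum_two_le:
  fixes f g :: "nat \<Rightarrow> nat"
  assumes "finite A" "x \<in> A" "y \<in> A" "x \<noteq> y" "\<forall>i\<in>A-{x,y}. f i = g i"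
    "f x + f y \<le> g x + g y"
  shows "sum f A \<le> sum g A"
proof -
  have e1: "sum f A = f x + f y + sum f (A-{x}-{y})"
    using assms(1-4) by (simp add: sum.remove)
  have e2: "sum g A = g x + g y + sum g (A-{x}-{y})"
    using assms(1-4) by (simp add: sum.remove)
  have "sum f (A-{x}-{y}) = sum g (A-{x}-{y})"
    using assms(5) by (intro sum.cong) auto
  then show ?thesis using e1 e2 assms(6) by simp
qed

lemma two_rearr:
  fixes x y u v :: nat
  assumes "x \<le> y" "u \<le> v"
  shows "x*v + y*u \<le> x*u + y*v"
proof -
  obtain d e where "y = x + d" "v = u + e" using assms le_Suc_ex by blast
  then show ?thesis by (simp add: algebra_simps)
qed

lemma rearr:
  fixes a c :: "nat \<Rightarrow> nat"
  assumes "\<sigma> permutes {1..N}"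
    "\<forall>i j. 1\<le>i \<longrightarrow> i\<le>j \<longrightarrow> j\<le>N \<longrightarrow> c i \<le> c j"
    "\<forall>i j. 1\<le>i \<longrightarrow> i\<le>j \<longrightarrow> j\<le>N \<longrightarrow> a j \<le> a i"
  shows "(\<Sum>i=1..N. a i * c i) \<le> (\<Sum>i=1..N. a (\<sigma> i) * c i)"
  using assms
proof (induction N arbitrary: \<sigma>)
  case 0
  then show ?case by simp
next
  case (Suc N)
  define M where "M = Suc N"
  define k where "k = inv \<sigma> M"
  have kin: "k \<in> {1..M}" unfolding k_def M_def
    using Suc.prems(1) permutes_inv permutes_in_image by fastforce
  have sk: "\<sigma> k = M" unfolding k_def using Suc.prems(1) permutes_inverses(1) by fastforce
  define \<tau> where "\<tau> = \<sigma> \<circ> transpose k M"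
  have tp: "\<tau> permutes {1..M}" unfolding \<tau>_def
    using Suc.prems(1) kin M_def by (intro permutes_compose permutes_swap_id) auto
  have tM: "\<tau> M = M" unfolding \<tau>_def using sk by simp
  have tp2: "\<tau> permutes {1..N}"
    using tp tM M_def by (intro permutes_superset[OF tp]) (metis Diff_iff atLeastAtMost_iff le_SucE)
  have IH: "(\<Sum>i=1..N. a i * c i) \<le> (\<Sum>i=1..N. a (\<tau> i) * c i)"
    using Suc.IH[OF tp2] Suc.prems(2,3) by auto
  have A: "(\<Sum>i=1..M. a i * c i) \<le> (\<Sum>i=1..M. a (\<tau> i) * c i)"
    using IH tM M_def by simp
  have B: "(\<Sum>i=1..M. a (\<tau> i) * c i) \<le> (\<Sum>i=1..M. a (\<sigma> i) * c i)"
  proof (cases "k = M")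
    case True
    then have "\<tau> = \<sigma>" unfolding \<tau>_def by simp
    then show ?thesis by simp
  next
    case False
    have jin: "\<sigma> M \<in> {1..M}" using Suc.prems(1) M_def permutes_in_image by fastforce
    have "a (\<tau> k) * c k + a (\<tau> M) * c M \<le> a (\<sigma> k) * c k + a (\<sigma> M) * c M"
    proof -
      have "\<tau> k = \<sigma> M" unfolding \<tau>_def by simp
      moreover have "a M \<le> a (\<sigma> M)" using Suc.prems(3) jin M_def by auto
      moreover have "c k \<le> c M" using Suc.prems(2) kin M_def by auto
      ultimately show ?thesis using tM sk two_rearr[of "a M" "a (\<sigma> M)" "c k" "c M"]
        by (simp add: add.commute)
    qed
    moreover have "\<forall>i\<in>{1..M}-{k,M}. a (\<tau> i) * c i = a (\<sigma> i) * c i"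
      unfolding \<tau>_def by (auto simp: transpose_def)
    ultimately show ?thesis
      using kin False by (intro sum_two_le) auto
  qed
  show ?case using A B M_def by simp
qed



lemma sorted_concat_I:
  assumes "\<forall>l\<in>set L. sorted (l::nat list)"
    "sorted_wrt (\<lambda>l1 l2. \<forall>x\<in>set l1. \<forall>y\<in>set l2. x \<le> y) L"
  shows "sorted (concat L)"
  using assms by (induction L) (auto simp: sorted_append)

lemma sorted_wrt_map_upt:
  assumes "\<forall>i j. a \<le> i \<longrightarrow> i < j \<longrightarrow> j < b \<longrightarrow> P (f i) (f j)"
  shows "sorted_wrt P (map f [a..<b])"
  using assms by (auto simp: sorted_wrt_iff_nth_less)

lemma sorted_map_upt:
  assumes "\<forall>i j. a \<le> i \<longrightarrow> i \<le> j \<longrightarrow> j < b \<longrightarrow> f i \<le> (f j::nat)"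
  shows "sorted (map f [a..<b])"
  using assms by (auto simp: sorted_iff_nth_mono)

lemma xS: "xmono m n i (S k) = (if 1 \<le> k \<and> k \<le> i then 1 else 0)"
  by (simp add: xmono_def mmul_def mprod_def svar_def mpow_def Tmono_def tvar_def)
lemma xT: "xmono m n i (Tv l) = (if 1 \<le> l \<and> l \<le> n-2 then i else 0)"
  by (simp add: xmono_def mmul_def mprod_def svar_def mpow_def Tmono_def tvar_def)
lemma yS: "ymono m n j (S k) = (if k \<le> m-1 then 1 else 0)"
  by (simp add: ymono_def mmul_def mprod_def svar_def mpow_def Tmono_def tvar_def)
lemma yT: "ymono m n j (Tv l) = (if 1 \<le> l \<and> l \<le> n-2 then m-1 else 0) + (if 1 \<le> l \<and> l \<le> j-1 then 1 else 0)"
  by (simp add: ymono_def mmul_def mprod_def svar_def mpow_def Tmono_def tvar_def)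

lemma zlist_len: assumes "0 < m" "0 < n" shows "length (zlist m n) = m*n"
proof -
  have "m + n \<le> m*n + 1"
  proof -
    obtain a b where "m = Suc a" "n = Suc b" using assms not0_implies_Suc by blast
    then show ?thesis by simp
  qed
  then show ?thesis using assms by (simp add: zlist_def length_concat o_def sum_list_triv algebra_simps)
qed
     
lemma sorted_gen:
  fixes X Y :: "nat \<Rightarrow> nat"
  assumes H1: "\<forall>i i'. 1\<le>i \<longrightarrow> i\<le>i' \<longrightarrow> i'<m \<longrightarrow> X i \<le> X i'"
   and H2: "\<forall>j j'. 1\<le>j \<longrightarrow> j\<le>j' \<longrightarrow> j'<n \<longrightarrow> Y j \<le> Y j'"
   and H3: "\<forall>i j. 1\<le>i \<longrightarrow> i<m \<longrightarrow> 1\<le>j \<longrightarrow> j<n \<longrightarrow> X i \<le> Y j"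
   and H4: "\<forall>i j j'. 1\<le>i \<longrightarrow> i<m \<longrightarrow> 1\<le>j \<longrightarrow> j<n \<longrightarrow> 1\<le>j' \<longrightarrow> j'<n \<longrightarrow> Y j \<le> X i + Y j'"
   and H5: "\<forall>i i' j j'. 1\<le>i \<longrightarrow> i<i' \<longrightarrow> i'<m \<longrightarrow> 1\<le>j \<longrightarrow> j<n \<longrightarrow> 1\<le>j' \<longrightarrow> j'<n \<longrightarrow> X i + Y j \<le> X i' + Y j'"
  shows "sorted ([0] @ map X [1..<m] @ map Y [1..<n] @ concat (map (\<lambda>i. map (\<lambda>j. X i + Y j) [1..<n]) [1..<m]))"
proof -
  define C where "C = concat (map (\<lambda>i. map (\<lambda>j. X i + Y j) [1..<n]) [1..<m])"
  have setC: "y \<in> set C \<Longrightarrow> \<exists>i j. 1 \<le> i \<and> i < m \<and> 1 \<le> j \<and> j < n \<and> y = X i + Y j" for y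
    unfolding C_def by fastforce
  have c: "sorted C"
    unfolding C_def
  proof (rule sorted_concat_I)
    show "\<forall>l\<in>set (map (\<lambda>i. map (\<lambda>j. X i + Y j) [1..<n]) [1..<m]). sorted l"
    proof
      fix l assume "l \<in> set (map (\<lambda>i. map (\<lambda>j. X i + Y j) [1..<n]) [1..<m])"
      then obtain i where "l = map (\<lambda>j. X i + Y j) [1..<n]" by auto
      then show "sorted l" using H2 by (simp add: sorted_map_upt)
    qed
    show "sorted_wrt (\<lambda>l1 l2. \<forall>x\<in>set l1. \<forall>y\<in>set l2. x \<le> y) (map (\<lambda>i. map (\<lambda>j. X i + Y j) [1..<n]) [1..<m])"
    proof (rule sorted_wrt_map_upt, intro allI impI ballI)
      fix i i' x y assume "1 \<le> i" "i < i'" "i' < m" "x \<in> set (map (\<lambda>j. X i + Y j) [1..<n])"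
        "y \<in> set (map (\<lambda>j. X i' + Y j) [1..<n])"
      then show "x \<le> y" using H5 by auto
    qed
  qed
  have a: "sorted (map X [1..<m])" using H1 by (simp add: sorted_map_upt)
  have b: "sorted (map Y [1..<n])" using H2 by (simp add: sorted_map_upt)
  have ab: "\<forall>x\<in>set (map X [1..<m]). \<forall>y\<in>set (map Y [1..<n]). x \<le> y" using H3 by auto
  have ac: "\<forall>x\<in>set (map X [1..<m]). \<forall>y\<in>set C. x \<le> y"
  proof (intro ballI)
    fix x y assume "x \<in> set (map X [1..<m])" "y \<in> set C"
    then obtain i where "1 \<le> i" "i < m" "x = X i" by auto
    obtain i' j where "1 \<le> i'" "i' < m" "1 \<le> j" "j < n" "y = X i' + Y j"
      using setC \<open>y \<in> set C\<close> by blast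
    have "X i \<le> Y j" using H3 \<open>1 \<le> i\<close> \<open>i < m\<close> \<open>1 \<le> j\<close> \<open>j < n\<close> by simp
    then show "x \<le> y" using \<open>x = X i\<close> \<open>y = X i' + Y j\<close> by simp
  qed
  have bc: "\<forall>x\<in>set (map Y [1..<n]). \<forall>y\<in>set C. x \<le> y"
  proof (intro ballI)
    fix x y assume "x \<in> set (map Y [1..<n])" "y \<in> set C"
    then obtain j' where "1 \<le> j'" "j' < n" "x = Y j'" by auto
    obtain i j where "1 \<le> i" "i < m" "1 \<le> j" "j < n" "y = X i + Y j"
      using setC \<open>y \<in> set C\<close> by blast
    then show "x \<le> y" using H4 \<open>1 \<le> i\<close> \<open>i < m\<close> \<open>1 \<le> j\<close> \<open>j < n\<close> \<open>1 \<le> j'\<close> \<open>j' < n\<close> \<open>x = Y j'\<close> \<open>y = X i + Y j\<close> by simp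
  qed
  have bC: "sorted (map Y [1..<n] @ C)"
    unfolding sorted_append using b c bc by blast
  have abC: "sorted (map X [1..<m] @ map Y [1..<n] @ C)"
    unfolding sorted_append[of "map X [1..<m]"] set_append using a bC ab ac by blast
  have "sorted ([0] @ (map X [1..<m] @ map Y [1..<n] @ C))"
    unfolding sorted_append[of "[0]"] using abC by simp
  then show ?thesis unfolding C_def .
qed

lemma sorted_coord:
  assumes "0 < m" "0 < n" "w \<in> vars m n"
  shows "sorted (map (\<lambda>z. z w) (zlist m n))"
proof -
  have eq: "map (\<lambda>z. z w) (zlist m n) = [0] @ map (\<lambda>i. xmono m n i w) [1..<m] @ map (\<lambda>j. ymono m n j w) [1..<n] @ concat (map (\<lambda>i. map (\<lambda>j. xmono m n i w + ymono m n j w) [1..<n]) [1..<m])"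
    by (simp add: zlist_def map_concat o_def mmul_def mone_def)
  from assms(3) consider (s) k where "w = S k" "k < m" | (t) l where "w = Tv l" "1 \<le> l" "l \<le> n-2"
    unfolding vars_def by auto
  then show ?thesis
  proof cases
    case s
    have xv: "xmono m n i w = (if 1 \<le> k \<and> k \<le> i then 1 else 0)" for i using s by (simp add: xS)
    have yv: "ymono m n j w = 1" for j using s by (simp add: yS)
    show ?thesis unfolding eq xv yv
    proof (rule sorted_gen)
      show "\<forall>i i'. 1\<le>i \<longrightarrow> i\<le>i' \<longrightarrow> i'<m \<longrightarrow> (if 1 \<le> k \<and> k \<le> i then 1 else 0) \<le> (if 1 \<le> k \<and> k \<le> i' then 1 else (0::nat))" by auto
      show "\<forall>j j'. 1\<le>j \<longrightarrow> j\<le>j' \<longrightarrow> j'<n \<longrightarrow> (1::nat) \<le> 1"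
        by auto
      show "\<forall>i j. 1\<le>i \<longrightarrow> i<m \<longrightarrow> 1\<le>j \<longrightarrow> j<n \<longrightarrow> (if 1 \<le> k \<and> k \<le> i then 1 else 0) \<le> (1::nat)"
        by auto
      show "\<forall>i j j'. 1\<le>i \<longrightarrow> i<m \<longrightarrow> 1\<le>j \<longrightarrow> j<n \<longrightarrow> 1\<le>j' \<longrightarrow> j'<n \<longrightarrow> (1::nat) \<le> (if 1 \<le> k \<and> k \<le> i then 1 else 0) + 1"
        by auto
      show "\<forall>i i' j j'. 1\<le>i \<longrightarrow> i<i' \<longrightarrow> i'<m \<longrightarrow> 1\<le>j \<longrightarrow> j<n \<longrightarrow> 1\<le>j' \<longrightarrow> j'<n \<longrightarrow> (if 1 \<le> k \<and> k \<le> i then 1 else 0) + (1::nat) \<le> (if 1 \<le> k \<and> k \<le> i' then 1 else 0) + 1"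
        by auto
    qed
  next
    case t
    have xv: "xmono m n i w = i" for i using t by (simp add: xT)
    have yv: "ymono m n j w = m - 1 + (if l < j then 1 else 0)" for j using t by (auto simp: yT)
    show ?thesis unfolding eq xv yv
    proof (rule sorted_gen)
      show "\<forall>i i'. 1\<le>i \<longrightarrow> i\<le>i' \<longrightarrow> i'<m \<longrightarrow> i \<le> i'" by simp
      show "\<forall>j j'. 1\<le>j \<longrightarrow> j\<le>j' \<longrightarrow> j'<n \<longrightarrow> m - 1 + (if l < j then 1 else 0) \<le> m - 1 + (if l < j' then 1 else 0)"
        by auto
      show "\<forall>i j. 1\<le>i \<longrightarrow> i<m \<longrightarrow> 1\<le>j \<longrightarrow> j<n \<longrightarrow> i \<le> m - 1 + (if l < j then 1 else 0)"
        by auto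
      show "\<forall>i j j'. 1\<le>i \<longrightarrow> i<m \<longrightarrow> 1\<le>j \<longrightarrow> j<n \<longrightarrow> 1\<le>j' \<longrightarrow> j'<n \<longrightarrow> m - 1 + (if l < j then 1 else 0) \<le> i + (m - 1 + (if l < j' then 1 else 0))"
        by auto
      show "\<forall>i i' j j'. 1\<le>i \<longrightarrow> i<i' \<longrightarrow> i'<m \<longrightarrow> 1\<le>j \<longrightarrow> j<n \<longrightarrow> 1\<le>j' \<longrightarrow> j'<n \<longrightarrow> i + (m - 1 + (if l < j then 1 else 0)) \<le> i' + (m - 1 + (if l < j' then 1 else 0))"
        by auto
    qed
  qed
qed

theorem mainTheorem14:
  fixes m n :: nat and \<sigma> lam :: "nat \<Rightarrow> nat"
  assumes "0 < m" and "0 < n"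
    and "\<sigma> permutes {1..m*n}"
    and "is_partition_upto (m*n) lam"
  shows "succeq m n (lvec m n lam \<sigma>) (lvec m n lam id)"
  unfolding succeq_def
proof
  fix w assume w: "w \<in> vars m n"
  define N where "N = m*n"
  define c where "c i = zmono m n i w" for i
  define a where "a k = lam k + N - k" for k
  have L: "lvec m n lam \<tau> w = (\<Sum>i=1..N. a (\<tau> i) * c i)" for \<tau>
    unfolding lvec_def mprod_def mpow_def a_def c_def N_def by simp
  have cm: "\<forall>i j. 1\<le>i \<longrightarrow> i\<le>j \<longrightarrow> j\<le>N \<longrightarrow> c i \<le> c j"
  proof (intro allI impI)
    fix i j assume h: "1 \<le> i" "i \<le> j" "j \<le> N"
    have s: "sorted (map (\<lambda>z. z w) (zlist m n))" using sorted_coord[OF assms(1,2) w] .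
    have len: "length (zlist m n) = N" using zlist_len[OF assms(1,2)] N_def by simp
    have "map (\<lambda>z. z w) (zlist m n) ! (i-1) \<le> map (\<lambda>z. z w) (zlist m n) ! (j-1)"
      using s h len by (intro sorted_nth_mono) auto
    then show "c i \<le> c j" using h len unfolding c_def zmono_def by simp
  qed
  have am: "\<forall>i j. 1\<le>i \<longrightarrow> i\<le>j \<longrightarrow> j\<le>N \<longrightarrow> a j \<le> a i"
  proof (intro allI impI)
    fix i j assume h: "1 \<le> i" "i \<le> j" "j \<le> N"
    have "lam j \<le> lam i" using assms(4) h N_def unfolding is_partition_upto_def by blast
    then show "a j \<le> a i" unfolding a_def using h by simp
  qed
  show "lvec m n lam id w \<le> lvec m n lam \<sigma> w"
    unfolding L using rearr[OF assms(3)[folded N_def] cm am] by simp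
qed
end
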